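(* Let $n\ge 1$ and let $\Sigma_0=(1\,2)(3\,4)\cdots(2n-1\,\,2n)\in S_{2n}$. Let $S_n[S_2]=\{\xi\in S_{2n}:\ \xi\Sigma_0\xi^{-1}=\Sigma_0\}$. Then for every $\sigma\in S_{2n}$ there exist $\xi\in S_n[S_2]$ and $\tau\in S_n$ such that $$\xi^{-1}\,\sigma^{-1}\Sigma_0\sigma\,\xi=(1\ \ 2\tau(1))\,(3\ \ 2\tau(2))\cdots(2n-1\ \ 2\tau(n)),$$ i.e. $\xi^{-1}\sigma^{-1}\Sigma_0\sigma\xi=\prod_{i=1}^n(2i-1,\ 2\tau(i))$.
   Context: $S_m$ denotes the symmetric group on $\{1,\dots,m\}$. The subgroup $S_n[S_2]$ (the wreath product, or hyperoctahedral group, of order $2^n n!$) is the centraliser of the fixed-point-free involution $\Sigma_0$ in $S_{2n}$. In the paper's notation $i^-=2i-1$, $i^+=2i$, so the target permutation is $(1^-\,\tau(1)^+)\cdots(n^-\,\tau(n)^+)$. *)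

theory Defs
  imports "HOL-Combinatorics.Combinatorics"
begin

text \<open>Permutations of {1..m} are functions nat => nat with f permutes {1..m}.
  Composition is function composition (right-to-left).\<close>

definition Sigma0 :: "nat \<Rightarrow> nat \<Rightarrow> nat" where
  "Sigma0 n k = (if k \<in> {1..2*n} then (if odd k then k + 1 else k - 1) else k)"

definition wreath :: "nat \<Rightarrow> (nat \<Rightarrow> nat) set" where
  "wreath n = {\<xi>. \<xi> permutes {1..2*n} \<and> \<xi> \<circ> Sigma0 n \<circ> inv \<xi> = Sigma0 n}"

text \<open>The product of disjoint transpositions (2i-1, 2 tau(i)), i = 1..n,
  for tau a permutation of {1..n}: sends 2i-1 to 2 tau(i) and 2j to 2 tau^{-1}(j) - 1.\<close>
definition pairing_perm :: "nat \<Rightarrow> (nat \<Rightarrow> nat) \<Rightarrow> nat \<Rightarrow> nat" where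
  "pairing_perm n \<tau> k =
     (if k \<in> {1..2*n} then
        (if odd k then 2 * \<tau> ((k + 1) div 2) else 2 * inv \<tau> (k div 2) - 1)
      else k)"

end

theory Submission imports Defs begin

lemma coloring:
  assumes "finite S"
    and "\<forall>x\<in>S. A x \<in> S \<and> A x \<noteq> x \<and> A (A x) = x"
    and "\<forall>x\<in>S. B x \<in> S \<and> B x \<noteq> x \<and> B (B x) = x"
  shows "\<exists>c::'a\<Rightarrow>bool. \<forall>x\<in>S. c (A x) \<noteq> c x \<and> c (B x) \<noteq> c x"
  using assms
proof (induction "card S" arbitrary: S A B rule: less_induct)
  case less
  show ?case
  proof (cases "S = {}")
    case True then show ?thesis by auto
  next
    case False
    then obtain x where x: "x \<in> S" by auto
    define y where "y = B x"
    have y: "y \<in> S" "y \<noteq> x" "B y = x" using less.prems x y_def by auto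
    define S' where "S' = S - {x, y}"
    have fin: "finite S'" using less.prems S'_def by auto
    have cardlt: "card S' < card S" using x y less.prems(1) S'_def
      by (metis Diff_insert2 card_Diff2_less)
    have Bs: "\<forall>z\<in>S'. B z \<in> S' \<and> B z \<noteq> z \<and> B (B z) = z"
    proof
      fix z assume z: "z \<in> S'"
      have p: "B z \<in> S" "B z \<noteq> z" "B (B z) = z" using less.prems(3) z S'_def by auto
      have "B z \<noteq> x" proof assume "B z = x" hence "B (B z) = B x" by simp hence "z = y" using p(3) y_def by simp thus False using z S'_def by auto qed
      moreover have "B z \<noteq> y" proof assume "B z = y" hence "B (B z) = B y" by simp hence "z = x" using p(3) y(3) by simp thus False using z S'_def by auto qed
      ultimately show "B z \<in> S' \<and> B z \<noteq> z \<and> B (B z) = z" using p S'_def by auto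
    qed
    show ?thesis
    proof (cases "y = A x")
      case True
      have As: "\<forall>z\<in>S'. A z \<in> S' \<and> A z \<noteq> z \<and> A (A z) = z"
      proof
        fix z assume z: "z \<in> S'"
        have p: "A z \<in> S" "A z \<noteq> z" "A (A z) = z" using less.prems(2) z S'_def by auto
        have "A x = y" "A y = x" using True less.prems(2) x by auto
        have "A z \<noteq> x" proof assume "A z = x" hence "A (A z) = A x" by simp hence "z = y" using p(3) \<open>A x = y\<close> by simp thus False using z S'_def by auto qed
        moreover have "A z \<noteq> y" proof assume "A z = y" hence "A (A z) = A y" by simp hence "z = x" using p(3) \<open>A y = x\<close> by simp thus False using z S'_def by auto qed
        ultimately show "A z \<in> S' \<and> A z \<noteq> z \<and> A (A z) = z" using p S'_def by auto
      qed
      obtain c :: "'a \<Rightarrow> bool" where c: "\<forall>z\<in>S'. c (A z) \<noteq> c z \<and> c (B z) \<noteq> c z"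
        using less.hyps[OF cardlt fin As Bs] by (elim exE) blast
      define d where "d = c(x := True, y := False)"
      have "\<forall>z\<in>S. d (A z) \<noteq> d z \<and> d (B z) \<noteq> d z"
      proof
        fix z assume z: "z \<in> S"
        show "d (A z) \<noteq> d z \<and> d (B z) \<noteq> d z"
        proof (cases "z \<in> S'")
          case True
          then have "A z \<in> S'" "B z \<in> S'" using As Bs by auto
          then show ?thesis using c True unfolding d_def S'_def by auto
        next
          case False
          then have "z = x \<or> z = y" using z S'_def by auto
          then show ?thesis using y True less.prems(2) x unfolding d_def y_def by auto
        qed
      qed
      then show ?thesis by blast
    next
      case False
      define x' where "x' = A x"
      define y' where "y' = A y"
      have x': "x' \<in> S" "x' \<noteq> x" "A x' = x" using less.prems(2) x x'_def by auto
      have y': "y' \<in> S" "y' \<noteq> y" "A y' = y" using less.prems(2) y y'_def by auto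
      have d1: "x' \<noteq> y'" using x' y' y by auto
      have d2: "x \<noteq> y'" using y' False x'_def by auto
      have d3: "y \<noteq> x'" using False x'_def by auto
      have inS': "x' \<in> S'" "y' \<in> S'" using x' y' d2 d3 unfolding S'_def by auto
      define A' where "A' = A(x' := y', y' := x')"
      have As: "\<forall>z\<in>S'. A' z \<in> S' \<and> A' z \<noteq> z \<and> A' (A' z) = z"
      proof
        fix z assume z: "z \<in> S'"
        show "A' z \<in> S' \<and> A' z \<noteq> z \<and> A' (A' z) = z"
        proof (cases "z = x' \<or> z = y'")
          case True then show ?thesis using inS' d1 unfolding A'_def by auto
        next
          case False
          have "A z \<in> S" "A z \<noteq> z" "A (A z) = z" using less.prems(2) z S'_def by auto
          moreover have "A z \<noteq> x" proof assume "A z = x" hence "A (A z) = A x" by simp thus False using False x'_def \<open>A (A z) = z\<close> by simp qed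
          moreover have "A z \<noteq> y" proof assume "A z = y" hence "A (A z) = A y" by simp thus False using False y'_def \<open>A (A z) = z\<close> by simp qed
          moreover have "A z \<noteq> x'" proof assume "A z = x'" hence "A (A z) = A x'" by simp hence "z = x" using x'(3) \<open>A (A z) = z\<close> by simp thus False using z S'_def by auto qed
          moreover have "A z \<noteq> y'" proof assume "A z = y'" hence "A (A z) = A y'" by simp hence "z = y" using y'(3) \<open>A (A z) = z\<close> by simp thus False using z S'_def by auto qed
          ultimately show ?thesis using False unfolding A'_def S'_def by auto
        qed
      qed
      obtain c :: "'a \<Rightarrow> bool" where c: "\<forall>z\<in>S'. c (A' z) \<noteq> c z \<and> c (B z) \<noteq> c z"
        using less.hyps[OF cardlt fin As Bs] by (elim exE) blast
      have "A' x' = y'" using d1 unfolding A'_def by simp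
      moreover have "c (A' x') \<noteq> c x'" using c inS'(1) by blast
      ultimately have cx'y': "c y' \<noteq> c x'" by simp
      have xS': "x \<notin> S'" "y \<notin> S'" unfolding S'_def by auto
      define d where "d = c(x := \<not> c x', y := c x')"
      have dS': "\<And>w. w \<in> S' \<Longrightarrow> d w = c w" using xS' unfolding d_def by auto
      have dx: "d x = (\<not> c x')" using y(2) unfolding d_def by simp
      have dy: "d y = c x'" unfolding d_def by simp
      have "\<forall>z\<in>S. d (A z) \<noteq> d z \<and> d (B z) \<noteq> d z"
      proof
        fix z assume z: "z \<in> S"
        show "d (A z) \<noteq> d z \<and> d (B z) \<noteq> d z"
        proof (cases "z \<in> S'")
          case True
          have Bz: "B z \<in> S'" using Bs True by blast
          have "c (B z) \<noteq> c z" using c True by blast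
          then have dB: "d (B z) \<noteq> d z" using dS' Bz True by simp
          show ?thesis
          proof (cases "z = x'")
            case True
            then show ?thesis using dB x'(3) dx dS' inS' by simp
          next
            case False
            show ?thesis
            proof (cases "z = y'")
              case True
              then show ?thesis using dB y'(3) dy dS' inS' cx'y' by simp
            next
              case False2: False
              have "A' z = A z" using False False2 unfolding A'_def by simp
              moreover have "A' z \<in> S'" using As \<open>z \<in> S'\<close> by blast
              moreover have "c (A' z) \<noteq> c z" using c \<open>z \<in> S'\<close> by blast
              ultimately show ?thesis using dB dS' \<open>z \<in> S'\<close> by simp
            qed
          qed
        next
          case False
          then have "z = x \<or> z = y" using z S'_def by auto
          then show ?thesis
          proof
            assume "z = x"
            then show ?thesis using dx dy dS' inS' x'_def y_def by simp
          next
            assume "z = y"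
            then show ?thesis using dx dy dS' inS' y'_def y(3) cx'y' by simp
          qed
        qed
      qed
      then show ?thesis by blast
    qed
  qed
qed


lemma S0_facts:
  assumes "x \<in> {1..2*n}"
  shows "Sigma0 n x \<in> {1..2*n}" "Sigma0 n x \<noteq> x" "Sigma0 n (Sigma0 n x) = x"
    "odd (Sigma0 n x) \<longleftrightarrow> \<not> odd x"
  using assms unfolding Sigma0_def by (auto elim!: oddE evenE) presburger+

lemma S0_out: "x \<notin> {1..2*n} \<Longrightarrow> Sigma0 n x = x"
  unfolding Sigma0_def by auto

theorem lemma1:
  fixes n :: nat and \<sigma> :: "nat \<Rightarrow> nat"
  assumes "n \<ge> 1" and "\<sigma> permutes {1..2*n}"
  shows "\<exists>\<xi> \<tau>. \<xi> \<in> wreath n \<and> \<tau> permutes {1..n} \<and>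
           inv \<xi> \<circ> inv \<sigma> \<circ> Sigma0 n \<circ> \<sigma> \<circ> \<xi> = pairing_perm n \<tau>"
proof -
  define S where "S = {1..2*n}"
  define A where "A = Sigma0 n"
  define B where "B = inv \<sigma> \<circ> Sigma0 n \<circ> \<sigma>"
  have sp: "\<sigma> permutes S" using assms(2) S_def by simp
  have Af: "\<forall>x\<in>S. A x \<in> S \<and> A x \<noteq> x \<and> A (A x) = x"
    using S0_facts unfolding A_def S_def by blast
  have Bf: "\<forall>x\<in>S. B x \<in> S \<and> B x \<noteq> x \<and> B (B x) = x"
  proof
    fix x assume x: "x \<in> S"
    have sx: "\<sigma> x \<in> S" using x permutes_in_image[OF sp] by simp
    have a: "Sigma0 n (\<sigma> x) \<in> S" "Sigma0 n (\<sigma> x) \<noteq> \<sigma> x" "Sigma0 n (Sigma0 n (\<sigma> x)) = \<sigma> x"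
      using S0_facts sx S_def by auto
    have "B x \<in> S" unfolding B_def using a(1) permutes_in_image[OF permutes_inv[OF sp]] by simp
    moreover have "B x \<noteq> x" unfolding B_def using a(2) permutes_inverses[OF sp] by (metis o_apply)
    moreover have "B (B x) = x" unfolding B_def using a(3) permutes_inverses[OF sp] by simp
    ultimately show "B x \<in> S \<and> B x \<noteq> x \<and> B (B x) = x" by blast
  qed
  obtain c :: "nat \<Rightarrow> bool" where c: "\<forall>x\<in>S. c (A x) \<noteq> c x \<and> c (B x) \<noteq> c x"
    using coloring[of S A B] Af Bf S_def by auto
  define \<xi> where "\<xi> x = (if x \<in> S then (if c x = odd x then x else Sigma0 n x) else x)" for x
  have xi_in: "\<xi> x \<in> S" if "x \<in> S" for x using that S0_facts S_def unfolding \<xi>_def by auto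
  have xi_odd: "odd (\<xi> x) = c x" if "x \<in> S" for x using that S0_facts S_def unfolding \<xi>_def by auto
  have xi_xi: "\<xi> (\<xi> x) = x" for x
  proof (cases "x \<in> S")
    case True
    have "c (Sigma0 n x) \<noteq> c x" using c True A_def by blast
    then show ?thesis using True S0_facts[of x n] S_def unfolding \<xi>_def by auto
  next
    case False then show ?thesis unfolding \<xi>_def by auto
  qed
  have xi_comm: "Sigma0 n (\<xi> x) = \<xi> (Sigma0 n x)" for x
  proof (cases "x \<in> S")
    case True
    have "c (Sigma0 n x) \<noteq> c x" using c True A_def by blast
    then show ?thesis using True S0_facts[of x n] S_def unfolding \<xi>_def by auto
  next
    case False then show ?thesis using S0_out S_def unfolding \<xi>_def by auto
  qed
  have xi_comp: "\<xi> \<circ> \<xi> = id" using xi_xi by auto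
  have inv_xi: "inv \<xi> = \<xi>" using inv_unique_comp[OF xi_comp xi_comp] .
  have xi_perm: "\<xi> permutes S"
    apply (rule bij_imp_permutes)
     apply (rule bij_betw_byWitness[where f'=\<xi>])
    using xi_xi xi_in apply auto[4]
    unfolding \<xi>_def by auto
  have wr: "\<xi> \<in> wreath n"
    unfolding wreath_def
  proof (intro CollectI conjI)
    show "\<xi> permutes {1..2 * n}" using xi_perm S_def by simp
    show "\<xi> \<circ> Sigma0 n \<circ> inv \<xi> = Sigma0 n"
      unfolding inv_xi by (rule ext) (simp add: xi_comm[symmetric] xi_xi)
  qed
  define \<rho> where "\<rho> x = \<xi> (B (\<xi> x))" for x
  have rho_in: "\<rho> x \<in> S" if "x \<in> S" for x using that xi_in Bf unfolding \<rho>_def by auto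
  have rho_rho: "\<rho> (\<rho> x) = x" if "x \<in> S" for x using that xi_in Bf xi_xi unfolding \<rho>_def by auto
  have rho_odd: "odd (\<rho> x) \<longleftrightarrow> \<not> odd x" if "x \<in> S" for x
  proof -
    have "odd (\<rho> x) = c (B (\<xi> x))" unfolding \<rho>_def using xi_odd Bf xi_in that by auto
    moreover have "odd x = c (\<xi> x)" using xi_odd[of "\<xi> x"] xi_in that xi_xi by simp
    moreover have "c (B (\<xi> x)) \<noteq> c (\<xi> x)" using c xi_in that by blast
    ultimately show ?thesis by simp
  qed
  have lhs: "inv \<xi> \<circ> inv \<sigma> \<circ> Sigma0 n \<circ> \<sigma> \<circ> \<xi> = \<rho>"
    unfolding inv_xi \<rho>_def B_def by (rule ext) simp
  have rho_out: "\<rho> x = x" if "x \<notin> S" for x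
  proof -
    have "\<xi> x = x" using that unfolding \<xi>_def by simp
    moreover have "\<sigma> x = x" using that permutes_not_in[OF sp] by simp
    moreover have "inv \<sigma> x = x" using that permutes_not_in[OF permutes_inv[OF sp]] by simp
    ultimately show ?thesis unfolding \<rho>_def B_def using S0_out[of x n] that S_def by simp
  qed
  define T where "T = {1..n}"
  define \<tau> where "\<tau> i = (if i \<in> T then \<rho> (2*i - 1) div 2 else i)" for i
  define \<tau>' where "\<tau>' i = (if i \<in> T then (\<rho> (2*i) + 1) div 2 else i)" for i
  have oddin: "2*i - 1 \<in> S" "odd (2*i - 1)" if "i \<in> T" for i using that unfolding S_def T_def by auto
  have evin: "2*i \<in> S" "even (2*i)" if "i \<in> T" for i using that unfolding S_def T_def by auto
  have tau_in: "\<tau> i \<in> T" "2 * \<tau> i = \<rho> (2*i - 1)" if "i \<in> T" for i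
  proof -
    have o: "2*i - 1 \<in> S" "odd (2*i - 1)" using oddin that by auto
    have "\<rho> (2*i - 1) \<in> S" "even (\<rho> (2*i - 1))" using rho_in[OF o(1)] rho_odd[OF o(1)] o(2) by auto
    then show "\<tau> i \<in> T" "2 * \<tau> i = \<rho> (2*i - 1)" unfolding \<tau>_def S_def T_def using that T_def
      by (auto elim!: evenE)
  qed
  have tau'_in: "\<tau>' i \<in> T" "2 * \<tau>' i - 1 = \<rho> (2*i)" if "i \<in> T" for i
  proof -
    have o: "2*i \<in> S" "even (2*i)" using evin that by auto
    have "\<rho> (2*i) \<in> S" "odd (\<rho> (2*i))" using rho_in[OF o(1)] rho_odd[OF o(1)] o(2) by auto
    then show "\<tau>' i \<in> T" "2 * \<tau>' i - 1 = \<rho> (2*i)" unfolding \<tau>'_def S_def T_def using that T_def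
      by (auto elim!: oddE)
  qed
  have tt': "\<tau> (\<tau>' i) = i" if "i \<in> T" for i
  proof -
    have "\<tau> (\<tau>' i) = \<rho> (2 * \<tau>' i - 1) div 2" using tau'_in that \<tau>_def by simp
    also have "\<dots> = \<rho> (\<rho> (2*i)) div 2" using tau'_in that by simp
    also have "\<dots> = i" using rho_rho evin that by simp
    finally show ?thesis .
  qed
  have t't: "\<tau>' (\<tau> i) = i" if "i \<in> T" for i
  proof -
    have "\<tau>' (\<tau> i) = (\<rho> (2 * \<tau> i) + 1) div 2" using tau_in that \<tau>'_def by simp
    also have "\<dots> = (\<rho> (\<rho> (2*i - 1)) + 1) div 2" using tau_in that by simp
    also have "\<dots> = i" using rho_rho oddin that T_def by simp
    finally show ?thesis .
  qed
  have tau_perm: "\<tau> permutes T"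
    apply (rule bij_imp_permutes)
     apply (rule bij_betw_byWitness[where f'=\<tau>'])
    using tt' t't tau_in tau'_in apply auto[4]
    unfolding \<tau>_def by auto
  have "\<rho> = pairing_perm n \<tau>"
  proof (rule ext)
    fix k
    show "\<rho> k = pairing_perm n \<tau> k"
    proof (cases "k \<in> S")
      case False
      then have "k \<notin> {1..2*n}" using S_def by simp
      then show ?thesis using rho_out[OF False] unfolding pairing_perm_def by auto
    next
      case kS: True
      show ?thesis
      proof (cases "odd k")
        case True
        define i where "i = (k + 1) div 2"
        have iT: "i \<in> T" and ki: "k = 2*i - 1" using kS True unfolding i_def S_def T_def by (auto elim!: oddE)
        show ?thesis using tau_in(2)[OF iT] kS True S_def ki unfolding pairing_perm_def i_def[symmetric]
          by simp
      next
        case False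
        define m where "m = k div 2"
        have mT: "m \<in> T" and km: "k = 2*m" using kS False unfolding m_def S_def T_def by (auto elim!: evenE)
        have "inv \<tau> m = \<tau>' m" using permutes_inv_eq[OF tau_perm] tt' mT by simp
        then show ?thesis using tau'_in(2)[OF mT] kS False S_def km unfolding pairing_perm_def m_def[symmetric]
          by simp
      qed
    qed
  qed
  then show ?thesis using wr tau_perm lhs T_def by blast
qed

end
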